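(* Let $d,q\geq 2$ be integers with $d\mid q$. Then for every $x\in\mathbb{Z}$, the natural density of $\{n\in\mathbb{N}: u_q(n)+x\equiv 0\pmod d\}$ exists and equals $$\frac{1}{d^2}\sum_{f\mid\gcd(x,d)}f\cdot\varphi\!\left(\frac{d}{f}\right),$$ where the sum runs over positive divisors $f$ of $\gcd(x,d)$ and $\varphi$ is Euler's totient function.
   Context: For an integer $q\geq 2$ and $n\in\mathbb{N}$: $v_q(0)=0$ and, for $n>0$, $v_q(n)=\max\{k: q^k\mid n\}$; $w_q(n)=\sum_{i=0}^n v_q(i)$; $u_q(n)=\sum_{i=0}^n w_q(i)$. The natural density of $T\subseteq\mathbb{N}$ is $\lim_{N\to\infty}|\{n\in T: 0\leq n<N\}|/N$. *)

theory Defs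
  imports "HOL-Analysis.Analysis" "HOL-Number_Theory.Number_Theory"
begin

definition vq :: "nat \<Rightarrow> nat \<Rightarrow> nat" where
  "vq q n = (if n = 0 then 0 else (GREATEST k. q ^ k dvd n))"

definition wq :: "nat \<Rightarrow> nat \<Rightarrow> nat" where
  "wq q n = (\<Sum>i\<le>n. vq q i)"

definition uq :: "nat \<Rightarrow> nat \<Rightarrow> nat" where
  "uq q n = (\<Sum>i\<le>n. wq q i)"

definition has_natural_density :: "nat set \<Rightarrow> real \<Rightarrow> bool" where
  "has_natural_density T \<delta> \<longleftrightarrow>
     ((\<lambda>N. real (card {n \<in> T. n < N}) / real N) \<longlongrightarrow> \<delta>) sequentially"

end

theory Submission
  imports Defs
begin

lemma vq_mult: assumes "q \<ge> 2" "n > 0" shows "vq q n = multiplicity q n"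
proof -
  have nu: "\<not> is_unit q" using assms by simp
  show ?thesis unfolding vq_def using assms
    by (auto intro!: Greatest_equality multiplicity_dvd multiplicity_geI simp: nu)
qed

lemma vq_nd: assumes "q \<ge> 2" "\<not> q dvd n" shows "vq q n = 0"
proof (cases "n = 0")
  case False thus ?thesis using vq_mult[OF assms(1)] not_dvd_imp_multiplicity_0[OF assms(2)] by simp
qed (simp add: vq_def)

lemma vq_qm: assumes "q \<ge> 2" "n > 0" shows "vq q (q*n) = Suc (vq q n)"
proof -
  have nu: "\<not> is_unit q" using assms by simp
  show ?thesis using assms vq_mult[OF assms(1)] multiplicity_times_same[of n q] nu by simp
qed

lemma wq_Suc: "wq q (Suc n) = wq q n + vq q (Suc n)"
  unfolding wq_def by simp

lemma uq_Suc: "uq q (Suc n) = uq q n + wq q (Suc n)"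
  unfolding uq_def by simp

lemma wq_0: "wq q 0 = 0" unfolding wq_def vq_def by simp
lemma uq_0: "uq q 0 = 0" unfolding uq_def by (simp add: wq_0)

lemma wq_block: assumes "q \<ge> 2" "s < q" shows "wq q (q*j + s) = wq q (q*j)"
  using assms(2)
proof (induction s)
  case (Suc s)
  have "\<not> q dvd (q*j + Suc s)"
    using Suc.prems by (metis dvd_add_right_iff dvd_triv_left nat_dvd_not_less zero_less_Suc)
  then show ?case using Suc wq_Suc[of q "q*j+s"] vq_nd[OF assms(1)] by simp
qed simp

lemma wq_qj: assumes "q \<ge> 2" shows "wq q (q*j) = j + wq q j"
proof (induction j)
  case 0 thus ?case by (simp add: wq_0)
next
  case (Suc j)
  have e: "q * Suc j = Suc (q*j + (q - 1))" using assms by simp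
  have "wq q (q * Suc j) = wq q (q*j + (q-1)) + vq q (q * Suc j)"
  proof -
    have "wq q (q * Suc j) = wq q (Suc (q*j + (q - 1)))" using e by (simp only:)
    also have "\<dots> = wq q (q*j + (q-1)) + vq q (Suc (q*j + (q - 1)))" by (rule wq_Suc)
    finally show ?thesis using e by metis
  qed
  also have "\<dots> = j + wq q j + Suc (vq q (Suc j))"
    using wq_block[OF assms, of "q-1" j] assms Suc vq_qm[OF assms, of "Suc j"] by simp
  also have "\<dots> = Suc j + wq q (Suc j)" by (simp add: wq_Suc)
  finally show ?case .
qed

lemma wq_gen: assumes "q \<ge> 2" "s < q" shows "wq q (q*j + s) = j + wq q j"
  using wq_block[OF assms] wq_qj[OF assms(1)] by simp


lemma uq_lin: assumes "q \<ge> 2" "r < q" shows "uq q (q*m + r) = uq q (q*m) + r * (m + wq q m)"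
  using assms(2)
proof (induction r)
  case (Suc r)
  have "uq q (q*m + Suc r) = uq q (q*m + r) + wq q (Suc (q*m + r))"
    using uq_Suc[of q "q*m+r"] by simp
  also have "wq q (Suc (q*m + r)) = m + wq q m" using wq_gen[OF assms(1), of "Suc r" m] Suc.prems by simp
  finally show ?case using Suc by simp
qed simp

lemma uq_qm: assumes "q \<ge> 2" "d dvd q" shows "[uq q (q*m) = m + wq q m] (mod d)"
proof (induction m)
  case 0 thus ?case by (simp add: uq_0 wq_0)
next
  case (Suc m)
  define g where "g = m + wq q m"
  define g' where "g' = Suc m + wq q (Suc m)"
  have e: "q * Suc m = Suc (q*m + (q - 1))" using assms by simp
  have "uq q (q * Suc m) = uq q (Suc (q*m + (q - 1)))" using e by (simp only:)
  also have "\<dots> = uq q (q*m + (q-1)) + wq q (Suc (q*m + (q - 1)))" by (rule uq_Suc)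
  also have "wq q (Suc (q*m + (q - 1))) = g'" unfolding g'_def using e wq_qj[OF assms(1), of "Suc m"] by metis
  also have "uq q (q*m + (q-1)) = uq q (q*m) + (q-1) * g" unfolding g_def using uq_lin[OF assms(1), of "q-1" m] assms by simp
  finally have ex0: "uq q (q * Suc m) = uq q (q*m) + (q-1) * g + g'" by simp
  obtain k where k: "q = Suc k" using assms(1) by (cases q) auto
  have ex: "uq q (q * Suc m) + g = uq q (q*m) + q * g + g'" using ex0 unfolding k by simp
  have "[q * g = 0] (mod d)" using assms(2) by (simp add: cong_0_iff)
  hence "[uq q (q*m) + q * g + g' = g + 0 + g'] (mod d)" using Suc.IH unfolding g_def[symmetric]
    by (intro cong_add) auto
  hence "[uq q (q * Suc m) + g = g' + g] (mod d)" using ex by (simp add: add.commute)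
  hence "[uq q (q * Suc m) = g'] (mod d)" using cong_add_rcancel_nat by blast
  thus ?case unfolding g'_def .
qed

lemma uq_cong: assumes "q \<ge> 2" "d dvd q" "r < q"
  shows "[uq q (q*m + r) = Suc r * (m + wq q m)] (mod d)"
proof -
  have "[uq q (q*m) + r * (m + wq q m) = (m + wq q m) + r * (m + wq q m)] (mod d)"
    using uq_qm[OF assms(1,2)] by (intro cong_add) auto
  thus ?thesis using uq_lin[OF assms(1,3)] by simp
qed

lemma uq_block: assumes "q \<ge> 2" "d dvd q" "r < q" "s < q"
  shows "[uq q (q * q * j + q * s + r) = Suc r * (s + (j + wq q j))] (mod d)"
proof -
  have e: "q * q * j + q * s + r = q*(q*j+s) + r" by (simp add: algebra_simps)
  have w: "q*j + s + wq q (q*j+s) = q*j + (s + (j + wq q j))" using wq_gen[OF assms(1,4)] by simp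
  have "[q*j + (s + (j + wq q j)) = 0 + (s + (j + wq q j))] (mod d)"
    using assms(2) by (intro cong_add) (auto simp: cong_0_iff)
  hence "[Suc r * (q*j + s + wq q (q*j+s)) = Suc r * (s + (j + wq q j))] (mod d)"
    unfolding w by (intro cong_mult) auto
  with uq_cong[OF assms(1,2,3), of "q*j+s"] show ?thesis unfolding e using cong_trans by blast
qed


lemma sum_blocks: fixes m k :: nat and h :: "nat \<Rightarrow> 'a::comm_monoid_add" shows "(\<Sum>n<m*k. h n) = (\<Sum>i<k. \<Sum>r<m. h (m*i + r))"
proof (induction k)
  case (Suc k)
  have "(\<Sum>n<m*Suc k. h n) = (\<Sum>n\<in>{0..<m*k}. h n) + (\<Sum>n\<in>{m*k..<m*k+m}. h n)"
    by (simp add: atLeast0LessThan[symmetric] sum.atLeastLessThan_concat add.commute)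
  also have "(\<Sum>n\<in>{m*k..<m*k+m}. h n) = (\<Sum>r<m. h (m*k + r))"
    using sum.shift_bounds_nat_ivl[of h 0 "m*k" m]
    by (simp add: atLeast0LessThan add.commute)
  finally show ?case using Suc by (simp add: atLeast0LessThan)
qed simp

lemma per_mult: fixes i :: nat assumes "\<And>n. h (n + d) = h n" shows "h (d*i + r) = h r"
proof (induction i)
  case (Suc i)
  have "d * Suc i + r = (d*i + r) + d" by simp
  thus ?case using assms Suc by metis
qed simp

lemma sum_per: fixes h :: "nat \<Rightarrow> 'a::comm_semiring_1" assumes "\<And>n. h (n + d) = h n" shows "(\<Sum>n<d*k. h n) = of_nat k * (\<Sum>n<d. h n)"
  unfolding sum_blocks by (simp add: per_mult[of h, OF assms])

lemma sum_shift1: assumes "\<And>n. h (n + d) = h n" shows "(\<Sum>s<d. h (Suc s)) = (\<Sum>s<d. h s)"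
proof (cases d)
  case (Suc e)
  have "(\<Sum>s<d. h (Suc s)) = (\<Sum>s<e. h (Suc s)) + h (Suc e)" by (simp add: Suc)
  also have "h (Suc e) = h 0" using assms[of 0] Suc by simp
  also have "(\<Sum>s<e. h (Suc s)) + h 0 = (\<Sum>s<d. h s)" unfolding Suc sum.lessThan_Suc_shift by (simp add: add.commute)
  finally show ?thesis .
qed simp

lemma sum_shift: fixes t :: nat assumes "\<And>n. h (n + d) = h n" shows "(\<Sum>s<d. h (s + t)) = (\<Sum>s<d. h s)"
proof (induction t)
  case (Suc t)
  have "(\<Sum>s<d. h (s + Suc t)) = (\<Sum>s<d. (\<lambda>s. h (s + t)) (Suc s))" by simp
  also have "\<dots> = (\<Sum>s<d. h (s + t))"
    by (rule sum_shift1) (metis assms add.commute add.left_commute)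
  finally show ?case using Suc by simp
qed simp

definition ind :: "int \<Rightarrow> nat \<Rightarrow> nat \<Rightarrow> nat" where
  "ind x d y = (if [int y + x = 0] (mod int d) then 1 else 0)"

lemma ind_cong: assumes "[y = y'] (mod d)" shows "ind x d y = ind x d y'"
proof -
  have "[int y = int y'] (mod int d)" using assms by (simp add: cong_int_iff)
  hence "[int y + x = int y' + x] (mod int d)" by (intro cong_add) auto
  thus ?thesis unfolding ind_def using cong_trans cong_sym by metis
qed

lemma ind_multd: "ind x d (y + d * k) = ind x d y"
  by (rule ind_cong) (simp add: cong_def)

lemma block_count: assumes "d > 0" "d dvd q"
  shows "(\<Sum>s<q. \<Sum>r<q. ind x d (Suc r * (s + t))) =
         (q div d) * (q div d) * (\<Sum>a\<in>{0<..d}. \<Sum>b<d. ind x d (a * b))"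
proof -
  obtain k where q: "q = d * k" using assms(2) by blast
  have kk: "q div d = k" using q assms(1) by simp
  define F where "F a = (\<Sum>s<d. ind x d (a * s))" for a
  have "(\<Sum>s<q. \<Sum>r<q. ind x d (Suc r * (s + t))) = (\<Sum>r<q. \<Sum>s<q. ind x d (Suc r * (s + t)))"
    by (rule sum.swap)
  also have "\<dots> = (\<Sum>r<q. k * F (Suc r))"
  proof (rule sum.cong[OF refl])
    fix r
    have p1: "ind x d (Suc r * (n + d + t)) = ind x d (Suc r * (n + t))" for n
    proof -
      have "Suc r * (n + d + t) = Suc r * (n + t) + d * Suc r" by (simp add: algebra_simps)
      thus ?thesis by (simp only: ind_multd)
    qed
    have p2: "ind x d (Suc r * (n + d)) = ind x d (Suc r * n)" for n
    proof -
      have "Suc r * (n + d) = Suc r * n + d * Suc r" by (simp add: algebra_simps)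
      thus ?thesis by (simp only: ind_multd)
    qed
    have "(\<Sum>s<q. ind x d (Suc r * (s + t))) = k * (\<Sum>s<d. ind x d (Suc r * (s + t)))"
      unfolding q using sum_per[of "\<lambda>s. ind x d (Suc r * (s + t))" d k] p1 by simp
    also have "(\<Sum>s<d. ind x d (Suc r * (s + t))) = F (Suc r)"
      unfolding F_def using sum_shift[where h="\<lambda>s. ind x d (Suc r * s)" and d=d and t=t] p2 by simp
    finally show "(\<Sum>s<q. ind x d (Suc r * (s + t))) = k * F (Suc r)" .
  qed
  also have "\<dots> = k * (\<Sum>r<q. F (Suc r))" by (simp add: sum_distrib_left)
  also have "(\<Sum>r<q. F (Suc r)) = k * (\<Sum>r<d. F (Suc r))"
  proof -
    have "F (Suc (n + d)) = F (Suc n)" for n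
    proof -
      have "F (Suc (n + d)) = (\<Sum>s<d. ind x d (Suc n * s + d * s))" unfolding F_def
        by (simp add: algebra_simps)
      thus ?thesis unfolding F_def by (simp only: ind_multd)
    qed
    thus ?thesis unfolding q using sum_per[of "\<lambda>r. F (Suc r)" d k] by simp
  qed
  also have "(\<Sum>r<d. F (Suc r)) = (\<Sum>a\<in>{0<..d}. F a)"
  proof -
    have "{0<..d} = Suc ` {..<d}" using image_Suc_lessThan[of d] by auto
    thus ?thesis by (simp add: sum.reindex)
  qed
  finally show ?thesis unfolding kk F_def by simp
qed


lemma lin_count: assumes "a > 0" "d > 0"
  shows "(\<Sum>b<d. ind x d (a * b)) = (if int (gcd a d) dvd x then gcd a d else 0)"
proof (cases "int (gcd a d) dvd x")
  case False
  have "ind x d (a * b) = 0" for b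
  proof (rule ccontr)
    assume "ind x d (a * b) \<noteq> 0"
    hence "int d dvd int (a*b) + x" unfolding ind_def by (auto split: if_splits simp: cong_0_iff)
    moreover have "int (gcd a d) dvd int d" by simp
    ultimately have "int (gcd a d) dvd int (a*b) + x" using dvd_trans by blast
    moreover have "int (gcd a d) dvd int (a*b)" by simp
    ultimately show False using False by (simp add: dvd_add_right_iff)
  qed
  thus ?thesis using False by simp
next
  case True
  define g where "g = gcd a d"
  have gpos: "g > 0" using assms unfolding g_def by simp
  obtain a' where a': "a = g * a'" unfolding g_def by (meson gcd_dvd1 dvdE)
  obtain d' where d': "d = g * d'" unfolding g_def by (meson gcd_dvd2 dvdE)
  obtain x' where x': "x = int g * x'" using True unfolding g_def by (meson dvdE)
  have cop: "coprime a' d'"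
  proof -
    have "a div g = a'" "d div g = d'" using a' d' gpos by simp_all
    thus ?thesis using div_gcd_coprime[of a d] assms unfolding g_def by simp
  qed
  have dpos: "d' > 0" using d' assms by simp
  obtain u where u: "[int a' * u = 1] (mod int d')"
    using cong_solve_coprime_int[of "int a'" "int d'"] cop by auto
  have u': "int d' dvd int a' * u - 1" using u by (simp add: cong_iff_dvd_diff)
  define b0 where "b0 = - x' * u"
  define b1 where "b1 = nat (b0 mod int d')"
  have b1: "b1 < d'" "int b1 = b0 mod int d'" using dpos unfolding b1_def by (auto simp: nat_less_iff)
  have key: "ind x d (a * b) = (if [int b = b0] (mod int d') then 1 else 0)" for b
  proof -
    have "[int (a*b) + x = 0] (mod int d) \<longleftrightarrow> int g * int d' dvd int g * (int a' * int b + x')"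
      unfolding a' d' x' by (simp add: cong_0_iff algebra_simps)
    also have "\<dots> \<longleftrightarrow> int d' dvd int a' * int b + x'" using gpos by simp
    also have "\<dots> \<longleftrightarrow> int d' dvd int b - b0"
    proof
      assume h: "int d' dvd int a' * int b + x'"
      have "int b - b0 = u * (int a' * int b + x') - int b * (int a' * u - 1)"
        unfolding b0_def by (simp add: algebra_simps)
      thus "int d' dvd int b - b0" using h u' by (metis dvd_diff dvd_mult)
    next
      assume h: "int d' dvd int b - b0"
      have "int a' * int b + x' = int a' * (int b - b0) - x' * (int a' * u - 1)"
        unfolding b0_def by (simp add: algebra_simps)
      thus "int d' dvd int a' * int b + x'" using h u' by (metis dvd_diff dvd_mult)
    qed
    finally show ?thesis unfolding ind_def by (simp add: cong_iff_dvd_diff)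
  qed
  have per: "(if [int (n + d') = b0] (mod int d') then 1 else 0::nat) = (if [int n = b0] (mod int d') then 1 else 0)" for n
  proof -
    have "[int (n + d') = int n] (mod int d')" by (simp add: cong_def)
    thus ?thesis using cong_trans cong_sym by metis
  qed
  have one: "(\<Sum>b<d'. (if [int b = b0] (mod int d') then 1 else 0::nat)) = 1"
  proof -
    have "(\<Sum>b<d'. (if [int b = b0] (mod int d') then 1 else 0::nat)) = (\<Sum>b<d'. (if b = b1 then 1 else 0))"
    proof (rule sum.cong[OF refl])
      fix b assume "b \<in> {..<d'}"
      hence "int b mod int d' = int b" by simp
      hence "[int b = b0] (mod int d') \<longleftrightarrow> b = b1" using b1 unfolding cong_def by auto
      thus "(if [int b = b0] (mod int d') then 1 else 0::nat) = (if b = b1 then 1 else 0)" by simp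
    qed
    also have "\<dots> = 1" using b1(1) by simp
    finally show ?thesis .
  qed
  have "(\<Sum>b<d. ind x d (a * b)) = (\<Sum>b<d'*g. (if [int b = b0] (mod int d') then 1 else 0::nat))"
    using key d' by (simp add: mult.commute)
  also have "\<dots> = g" using sum_per[of "\<lambda>b. (if [int b = b0] (mod int d') then 1 else 0::nat)" d' g] per one
    by simp
  finally show ?thesis using True unfolding g_def by simp
qed


lemma nt_sum: assumes "d > 0"
  shows "(\<Sum>a\<in>{0<..d}. \<Sum>b<d. ind x d (a * b)) =
         (\<Sum>f | f dvd nat (gcd x (int d)). f * totient (d div f))"
proof -
  define h where "h f = (if int f dvd x then f else 0)" for f
  define A where "A = {0<..d}"
  have "(\<Sum>a\<in>A. \<Sum>b<d. ind x d (a * b)) = (\<Sum>a\<in>A. h (gcd a d))"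
    unfolding A_def h_def using lin_count assms by (intro sum.cong) auto
  also have "\<dots> = (\<Sum>f\<in>(\<lambda>a. gcd a d) ` A. \<Sum>a\<in>{a\<in>A. gcd a d = f}. h (gcd a d))"
    by (rule sum.image_gen) (simp add: A_def)
  also have "(\<lambda>a. gcd a d) ` A = {f. f dvd d}"
  proof
    show "(\<lambda>a. gcd a d) ` A \<subseteq> {f. f dvd d}" by auto
    show "{f. f dvd d} \<subseteq> (\<lambda>a. gcd a d) ` A"
    proof
      fix f assume "f \<in> {f. f dvd d}"
      hence f: "f dvd d" by simp
      hence "f \<in> A" "gcd f d = f" using assms unfolding A_def
        by (auto simp: dvd_imp_le gcd_nat.absorb1 intro: Nat.gr0I)
      thus "f \<in> (\<lambda>a. gcd a d) ` A" by (metis image_eqI)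
    qed
  qed
  also have "(\<Sum>f\<in>{f. f dvd d}. \<Sum>a\<in>{a\<in>A. gcd a d = f}. h (gcd a d)) =
             (\<Sum>f\<in>{f. f dvd d}. h f * totient (d div f))"
  proof (rule sum.cong[OF refl])
    fix f assume "f \<in> {f. f dvd d}"
    hence "card {a\<in>A. gcd a d = f} = totient (d div f)"
      unfolding A_def using card_gcd_eq_totient[OF assms] by simp
    moreover have "(\<Sum>a\<in>{a\<in>A. gcd a d = f}. h (gcd a d)) = (\<Sum>a\<in>{a\<in>A. gcd a d = f}. h f)"
      by (rule sum.cong) auto
    ultimately show "(\<Sum>a\<in>{a\<in>A. gcd a d = f}. h (gcd a d)) = h f * totient (d div f)" by simp
  qed
  also have "\<dots> = (\<Sum>f\<in>{f \<in> {f. f dvd d}. int f dvd x}. f * totient (d div f))"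
    unfolding h_def using assms by (subst sum.inter_filter) (auto intro!: sum.cong)
  also have "{f \<in> {f. f dvd d}. int f dvd x} = {f. f dvd nat (gcd x (int d))}"
  proof -
    have "f dvd nat (gcd x (int d)) \<longleftrightarrow> int f dvd gcd x (int d)" for f
      by (metis gcd_ge_0_int nat_0_le of_nat_dvd_iff)
    thus ?thesis by auto
  qed
  finally show ?thesis unfolding A_def .
qed


lemma density_from_blocks:
  fixes h :: "nat \<Rightarrow> nat"
  assumes M: "M > 0" and blk: "\<And>J. (\<Sum>n<M*J. h n) = J * K"
  shows "((\<lambda>N. real (\<Sum>n<N. h n) / real N) \<longlongrightarrow> real K / real M) sequentially"
proof -
  define C where "C N = (\<Sum>n<N. h n)" for N
  have mono: "C A \<le> C B" if "A \<le> B" for A B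
    unfolding C_def using that by (intro sum_mono2) auto
  have bnds: "real K / real M - real K / real N \<le> real (C N) / real N \<and>
              real (C N) / real N \<le> real K / real M + real K / real N" if N: "N > 0" for N
  proof -
    define J where "J = N div M"
    have j1: "M * J \<le> N" unfolding J_def by simp
    have j2: "N < M * (J+1)" unfolding J_def using M
      by (metis add.commute div_mult_mod_eq mod_less_divisor mult.commute mult_Suc_right nat_add_left_cancel_less Suc_eq_plus1)
    have c1: "J * K \<le> C N" using mono[OF j1] blk[of J] unfolding C_def by simp
    have c2: "C N \<le> (J+1) * K" using mono[of N "M*(J+1)"] j2 blk[of "J+1"] unfolding C_def by simp
    have i1: "N * K \<le> M * (C N + K)"
    proof -
      have "N * K \<le> M * (J+1) * K" using j2 by simp
      also have "\<dots> = M * (J * K + K)" by (simp add: algebra_simps)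
      also have "\<dots> \<le> M * (C N + K)" using c1 by simp
      finally show ?thesis .
    qed
    have i2: "M * C N \<le> (N + M) * K"
    proof -
      have "M * C N \<le> M * ((J+1) * K)" using c2 by simp
      also have "\<dots> = (M * J + M) * K" by (simp add: algebra_simps)
      also have "\<dots> \<le> (N + M) * K" using j1 by simp
      finally show ?thesis .
    qed
    have r1: "real N * real K \<le> real M * (real (C N) + real K)" using i1 by (metis of_nat_add of_nat_le_iff of_nat_mult)
    have r2: "real M * real (C N) \<le> (real N + real M) * real K" using i2 by (metis of_nat_add of_nat_le_iff of_nat_mult)
    have Mr: "real M > 0" "real N > 0" using M N by auto
    have r1': "real N * (real N * real K) \<le> real N * (real M * (real (C N) + real K))"
      using mult_left_mono[OF r1, of "real N"] by simp
    have r2': "real N * (real M * real (C N)) \<le> real N * ((real N + real M) * real K)"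
      using mult_left_mono[OF r2, of "real N"] by simp
    show ?thesis using r1' r2 Mr by (auto simp: field_simps)
  qed
  have lo: "((\<lambda>N. real K / real M - real K / real N) \<longlongrightarrow> real K / real M) sequentially"
    using tendsto_diff[OF tendsto_const lim_const_over_n[of "real K"]] by simp
  have hi: "((\<lambda>N. real K / real M + real K / real N) \<longlongrightarrow> real K / real M) sequentially"
    using tendsto_add[OF tendsto_const lim_const_over_n[of "real K"]] by simp
  have ev: "eventually (\<lambda>N. N > (0::nat)) sequentially" by (rule eventually_gt_at_top)
  have "((\<lambda>N. real (C N) / real N) \<longlongrightarrow> real K / real M) sequentially"
  proof (rule tendsto_sandwich[OF _ _ lo hi])
    show "\<forall>\<^sub>F n in sequentially. real K / real M - real K / real n \<le> real (C n) / real n"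
      using ev by (rule eventually_mono) (use bnds in blast)
    show "\<forall>\<^sub>F n in sequentially. real (C n) / real n \<le> real K / real M + real K / real n"
      using ev by (rule eventually_mono) (use bnds in blast)
  qed
  thus ?thesis unfolding C_def .
qed


lemma main_blk:
  assumes q2: "q \<ge> 2" and dpos: "d > 0" and dq: "d dvd q"
  shows "(\<Sum>n<(q*q)*J. ind x d (uq q n)) =
         J * ((q div d) * (q div d) * (\<Sum>a\<in>{0<..d}. \<Sum>b<d. ind x d (a * b)))"
proof -
  define h where "h n = ind x d (uq q n)" for n
  define K where "K = (q div d) * (q div d) * (\<Sum>a\<in>{0<..d}. \<Sum>b<d. ind x d (a * b))"
  have "(\<Sum>n<(q*q)*J. h n) = (\<Sum>j<J. \<Sum>i<q*q. h (q*q*j + i))" by (rule sum_blocks)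
  also have "\<dots> = (\<Sum>j<J. K)"
  proof (rule sum.cong[OF refl])
    fix j
    have "(\<Sum>i<q*q. h (q*q*j + i)) = (\<Sum>s<q. \<Sum>r<q. h (q*q*j + (q * s + r)))"
      by (rule sum_blocks)
    also have "\<dots> = (\<Sum>s<q. \<Sum>r<q. ind x d (Suc r * (s + (j + wq q j))))"
    proof (intro sum.cong refl)
      fix s r assume "s \<in> {..<q}" "r \<in> {..<q}"
      hence "[uq q (q * q * j + q * s + r) = Suc r * (s + (j + wq q j))] (mod d)"
        using uq_block[OF q2 dq] by simp
      hence "ind x d (uq q (q * q * j + q * s + r)) = ind x d (Suc r * (s + (j + wq q j)))"
        by (rule ind_cong)
      thus "h (q*q*j + (q * s + r)) = ind x d (Suc r * (s + (j + wq q j)))"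
        unfolding h_def by (simp only: add.assoc)
    qed
    also have "\<dots> = K" unfolding K_def by (rule block_count[OF dpos dq])
    finally show "(\<Sum>i<q*q. h (q*q*j + i)) = K" .
  qed
  finally show ?thesis unfolding h_def K_def by simp
qed

theorem theorem4p2:
  fixes d q :: nat and x :: int
  assumes "d \<ge> 2" and "q \<ge> 2" and "d dvd q"
  shows "has_natural_density {n. [int (uq q n) + x = 0] (mod int d)}
           ((1 / real d ^ 2) *
            (\<Sum>f | f dvd nat (gcd x (int d)). real f * real (totient (d div f))))"
proof -
  define T where "T = {n. [int (uq q n) + x = 0] (mod int d)}"
  define h where "h n = ind x d (uq q n)" for n
  define S where "S = (\<Sum>a\<in>{0<..d}. \<Sum>b<d. ind x d (a * b))"
  define K where "K = (q div d) * (q div d) * S"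
  have dpos: "d > 0" using assms by simp
  have blk: "(\<Sum>n<(q*q)*J. h n) = J * K" for J
    unfolding h_def K_def S_def by (rule main_blk[OF assms(2) dpos assms(3)])
  have M: "q * q > 0" using assms by simp
  have lim: "((\<lambda>N. real (\<Sum>n<N. h n) / real N) \<longlongrightarrow> real K / real (q*q)) sequentially"
    by (rule density_from_blocks[OF M blk])
  have card: "card {n \<in> T. n < N} = (\<Sum>n<N. h n)" for N
  proof -
    have "{n \<in> T. n < N} = {n \<in> {..<N}. n \<in> T}" by auto
    hence "card {n \<in> T. n < N} = card {n \<in> {..<N}. n \<in> T}" by (rule arg_cong)
    also have "\<dots> = (\<Sum>n\<in>{n \<in> {..<N}. n \<in> T}. 1)" by (rule card_eq_sum)
    also have "\<dots> = (\<Sum>n<N. if n \<in> T then 1 else 0)" by (rule sum.inter_filter) simp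
    also have "\<dots> = (\<Sum>n<N. h n)" unfolding h_def ind_def T_def by simp
    finally show ?thesis .
  qed
  obtain k where qk: "q = d * k" using assms(3) by blast
  have kpos: "k > 0" using qk assms by (cases k) auto
  have v1: "real K / real (q*q) = real S / (real d)^2"
  proof -
    have "q div d = k" using qk dpos by simp
    hence "K = k * k * S" unfolding K_def by simp
    hence "real K = real k * real k * real S" by simp
    moreover have "real (q*q) = real d * real d * (real k * real k)" unfolding qk by simp
    ultimately show ?thesis using dpos kpos by (simp add: power2_eq_square)
  qed
  have v2: "real S / (real d)^2 = (1 / real d ^ 2) * (\<Sum>f | f dvd nat (gcd x (int d)). real f * real (totient (d div f)))"
    unfolding S_def nt_sum[OF dpos] by simp
  have "((\<lambda>N. real (card {n \<in> T. n < N}) / real N) \<longlongrightarrow> real K / real (q*q)) sequentially"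
    unfolding card by (rule lim)
  thus ?thesis unfolding has_natural_density_def T_def v1 v2 by simp
qed

end
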